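(* Let $d\ge2$, $q\ge2$ and $1\le p\le q-1$ with $\gcd(p,q)=1$. For $1\le k\le d-1$, the number $N_k$ of $\sigma_d$-rotational sets $A\subset\mathbb{T}$ that are the union of exactly $k$ distinct $\sigma_d$-orbits and have rotation number $p/q$ (i.e. $|A|=kq$ and, listing $A=\{u_0<\dots<u_{kq-1}\}$, $\sigma_d(u_j)=u_{j+kp}$ for all $j\in\mathbb{Z}/kq\mathbb{Z}$) equals $$N_k=\sum_{j=1}^k(-1)^{k+j}\binom{k-1}{j-1}\binom{d-2+jq}{d-2}.$$
   Context: $\mathbb{T}=\mathbb{R}/\mathbb{Z}$, ordered by representatives in $[0,1)$; $\sigma_d(t)=dt$. A finite set $\{u_0<\dots<u_{N-1}\}\subset\mathbb{T}$ (indices in $\mathbb{Z}/N\mathbb{Z}$) is $\sigma_d$-rotational if for some fixed $0\ne P\in\mathbb{Z}/N\mathbb{Z}$, $\sigma_d(u_j)=u_{j+P}$ for all $j$; its rotation number is $P/N$. *)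

theory Defs
  imports Complex_Main
begin

text \<open>The circle T = R/Z is represented by the representatives in [0,1), with the
  order of the reals. The map sigma_d(t) = d t mod 1.\<close>

definition sigma :: "nat \<Rightarrow> real \<Rightarrow> real" where
  "sigma d t = frac (real d * t)"

text \<open>A finite nonempty set A of points of T, listed increasingly as
  u_0 < ... < u_(N-1) (N = card A), is sigma_d-rotational with shift P (P taken as a
  representative of an element of Z/NZ, required nonzero mod N) if
  sigma_d(u_j) = u_(j+P mod N) for all j. Its rotation number is then P/N.\<close>

definition rotational_with :: "nat \<Rightarrow> real set \<Rightarrow> nat \<Rightarrow> bool" where
  "rotational_with d A P \<longleftrightarrow>
     finite A \<and> A \<noteq> {} \<and> A \<subseteq> {0..<1} \<and> P mod card A \<noteq> 0 \<and>
     (\<forall>j < card A. sigma d (sorted_list_of_set A ! j)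
                    = sorted_list_of_set A ! ((j + P) mod card A))"

end

theory Submission
  imports Defs "HOL-Library.Multiset" "HOL-Number_Theory.Cong"
begin


definition G :: "real set \<Rightarrow> nat \<Rightarrow> real" where
  "G A i = sorted_list_of_set A ! (i mod card A) + real (i div card A)"

lemma frac_of_diff_int:
  fixes x y :: real
  assumes "x - y \<in> \<int>" "0 \<le> y" "y < 1"
  shows "frac x = y"
proof -
  have "frac x = frac (y + (x - y))" by simp
  also have "\<dots> = frac y" using assms(1) by (rule frac_add_int_right)
  also have "\<dots> = y" using assms by (simp add: frac_eq)
  finally show ?thesis .
qed

context
  fixes A :: "real set"
  assumes fin: "finite A" and sub: "A \<subseteq> {0..<1}" and ne: "A \<noteq> {}"
begin

lemma cardA_pos: "card A > 0" using fin ne by (simp add: card_gt_0_iff)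

lemma len_xs: "length (sorted_list_of_set A) = card A"
  by (simp add: length_sorted_list_of_set)

lemma xs_in: "i < card A \<Longrightarrow> sorted_list_of_set A ! i \<in> A"
  using fin len_xs by (metis nth_mem set_sorted_list_of_set)

lemma xs_bounds: "i < card A \<Longrightarrow> 0 \<le> sorted_list_of_set A ! i \<and> sorted_list_of_set A ! i < 1"
  using xs_in sub by fastforce

lemma xs_less: "i < j \<Longrightarrow> j < card A \<Longrightarrow> sorted_list_of_set A ! i < sorted_list_of_set A ! j"
  using strict_sorted_list_of_set[of A] len_xs by (simp add: sorted_wrt_nth_less)

lemma G_less_Suc: "G A i < G A (Suc i)"
proof (cases "Suc (i mod card A) = card A")
  case True
  then have "i mod card A = card A - 1" by simp
  then have "G A i = sorted_list_of_set A ! (card A - 1) + real (i div card A)"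
    by (simp add: G_def)
  moreover have "G A (Suc i) = sorted_list_of_set A ! 0 + real (i div card A) + 1"
    using True by (simp add: G_def mod_Suc div_Suc)
  moreover have "sorted_list_of_set A ! (card A - 1) < 1" "0 \<le> sorted_list_of_set A ! 0"
    using xs_bounds[of "card A - 1"] xs_bounds[of 0] cardA_pos by auto
  ultimately show ?thesis by simp
next
  case False
  then have "Suc (i mod card A) < card A" using cardA_pos
    by (metis Suc_lessI mod_less_divisor)
  then show ?thesis using False xs_less[of "i mod card A" "Suc (i mod card A)"]
    by (simp add: G_def mod_Suc div_Suc)
qed

lemma G_strict: "strict_mono (G A)"
  unfolding strict_mono_Suc_iff using G_less_Suc by blast

lemma G_per: "G A (i + card A) = G A i + 1"
  using cardA_pos by (simp add: G_def)

lemma G_frac: "frac (G A i) = sorted_list_of_set A ! (i mod card A)"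
proof -
  have "frac (G A i) = frac (sorted_list_of_set A ! (i mod card A) + of_int (int (i div card A)))"
    by (simp add: G_def)
  also have "\<dots> = frac (sorted_list_of_set A ! (i mod card A))" by (rule frac_add_of_int_right)
  also have "\<dots> = sorted_list_of_set A ! (i mod card A)"
    using xs_bounds[of "i mod card A"] cardA_pos by (simp add: frac_eq)
  finally show ?thesis .
qed

lemma G_small: "i < card A \<Longrightarrow> G A i = sorted_list_of_set A ! i"
  by (simp add: G_def)

lemma ROT:
  "rotational_with d A P \<longleftrightarrow> (P mod card A \<noteq> 0 \<and> (\<forall>i. real d * G A i - G A (i+P) \<in> \<int>))"
proof -
  define xs where "xs = sorted_list_of_set A"
  define n where "n = card A"
  have n0: "n > 0" using cardA_pos by (simp add: n_def)
  have key: "real d * G A i - G A (i+P) = (real d * xs ! (i mod n) - xs ! ((i mod n + P) mod n))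
       + (real d * real (i div n) - real ((i+P) div n))" for i
  proof -
    have m: "(i mod n + P) mod n = (i + P) mod n" by (simp add: mod_add_left_eq)
    show ?thesis unfolding m by (simp add: G_def xs_def n_def algebra_simps)
  qed
  show ?thesis
  proof
    assume R: "rotational_with d A P"
    then have Pm: "P mod n \<noteq> 0" by (simp add: rotational_with_def n_def)
    have "\<forall>i. real d * G A i - G A (i+P) \<in> \<int>"
    proof
      fix i
      have j: "i mod n < n" using n0 by simp
      then have "sigma d (xs ! (i mod n)) = xs ! ((i mod n + P) mod n)"
        using R by (simp add: rotational_with_def xs_def n_def)
      then have "real d * xs ! (i mod n) - xs ! ((i mod n + P) mod n) = of_int \<lfloor>real d * xs ! (i mod n)\<rfloor>"
        by (simp add: sigma_def frac_def)
      then show "real d * G A i - G A (i+P) \<in> \<int>"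
        unfolding key by (metis Ints_add Ints_diff Ints_mult Ints_of_int Ints_of_nat)
    qed
    then show "P mod card A \<noteq> 0 \<and> (\<forall>i. real d * G A i - G A (i+P) \<in> \<int>)" using Pm by (simp add: n_def)
  next
    assume R: "P mod card A \<noteq> 0 \<and> (\<forall>i. real d * G A i - G A (i+P) \<in> \<int>)"
    have "sigma d (xs ! j) = xs ! ((j + P) mod n)" if j: "j < n" for j
    proof -
      have "real d * G A j - G A (j+P) \<in> \<int>" using R by simp
      then have "(real d * xs ! j - xs ! ((j + P) mod n)) + (real d * real (j div n) - real ((j+P) div n)) \<in> \<int>"
        unfolding key using j by simp
      then have "real d * xs ! j - xs ! ((j + P) mod n) \<in> \<int>"
        by (metis Ints_diff Ints_mult Ints_of_nat add_diff_cancel_right')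
      moreover have "0 \<le> xs ! ((j + P) mod n)" "xs ! ((j + P) mod n) < 1"
        using xs_bounds[of "(j+P) mod n"] n0 by (auto simp: xs_def n_def)
      ultimately show ?thesis by (simp add: sigma_def frac_of_diff_int)
    qed
    then show "rotational_with d A P"
      using R fin ne sub by (simp add: rotational_with_def xs_def n_def)
  qed
qed

end


lemma card_class:
  fixes k q :: nat
  assumes "k > 0" "C \<subseteq> {..<k}"
  shows "card {t. t < k*q \<and> t mod k \<in> C} = card C * q"
proof -
  have "bij_betw (\<lambda>t. (t mod k, t div k)) {t. t < k*q \<and> t mod k \<in> C} (C \<times> {..<q})"
  proof (rule bij_betw_byWitness[where f'="\<lambda>(r,i). r + k*i"])
    show "\<forall>a\<in>{t. t < k * q \<and> t mod k \<in> C}. (case (a mod k, a div k) of (r, i) \<Rightarrow> r + k * i) = a"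
      by simp
    show "\<forall>a'\<in>C \<times> {..<q}. ((case a' of (r, i) \<Rightarrow> r + k * i) mod k, (case a' of (r, i) \<Rightarrow> r + k * i) div k) = a'"
      using assms by auto
    show "(\<lambda>t. (t mod k, t div k)) ` {t. t < k * q \<and> t mod k \<in> C} \<subseteq> C \<times> {..<q}"
      using assms by (auto intro: less_mult_imp_div_less simp: mult.commute)
    show "(\<lambda>(r, i). r + k * i) ` (C \<times> {..<q}) \<subseteq> {t. t < k * q \<and> t mod k \<in> C}"
    proof clarsimp
      fix r i assume "r \<in> C" "i < q"
      then have "r < k" using assms by auto
      have "r + k*i < k + k*i" using \<open>r<k\<close> by simp
      also have "\<dots> = k * (i+1)" by simp
      also have "\<dots> \<le> k*q" using \<open>i<q\<close> by (intro mult_le_mono2) simp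
      finally show "r + k*i < k*q \<and> r mod k \<in> C" using \<open>r<k\<close> \<open>r\<in>C\<close> by simp
    qed
  qed
  then show ?thesis by (simp add: bij_betw_same_card card_cartesian_product)
qed

lemma sum_by_card:
  fixes g :: "nat \<Rightarrow> int"
  assumes "finite K"
  shows "(\<Sum>B | B \<subseteq> K. g (card B)) = (\<Sum>n=0..card K. int (card K choose n) * g n)"
proof -
  have fin: "finite {B. B \<subseteq> K}" using assms by simp
  have "(\<Sum>B | B \<subseteq> K. g (card B)) = (\<Sum>n\<in>{0..card K}. \<Sum>B\<in>{B. B \<in> {B. B \<subseteq> K} \<and> card B = n}. g (card B))"
    by (rule sum.group[symmetric]) (use assms in \<open>auto intro: card_mono\<close>)
  also have "\<dots> = (\<Sum>n=0..card K. int (card K choose n) * g n)"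
  proof (rule sum.cong[OF refl])
    fix n
    have "(\<Sum>B\<in>{B. B \<in> {B. B \<subseteq> K} \<and> card B = n}. g (card B)) = (\<Sum>B\<in>{B. B \<subseteq> K \<and> card B = n}. g n)"
      by (rule sum.cong) auto
    also have "\<dots> = int (card K choose n) * g n"
      using n_subsets[OF assms, of n] by simp
    finally show "(\<Sum>B\<in>{B. B \<in> {B. B \<subseteq> K} \<and> card B = n}. g (card B)) = int (card K choose n) * g n" .
  qed
  finally show ?thesis .
qed

lemma card_M:
  fixes k q s :: nat
  assumes kpos: "k>0" and "q>0" and "s>0"
  shows "int (card {X \<in> multisets_of_size {..<k*q} s. \<forall>r<k. \<exists>t\<in>#X. t mod k = r})
     = (\<Sum>n=0..k. (-1)^n * int (k choose n) * int (((k-n)*q + s - 1) choose s))"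
proof -
  define U where "U = multisets_of_size {..<k*q} s"
  define Z where "Z r = {X\<in>U. \<forall>t\<in>#X. t mod k \<noteq> r}" for r
  define h where "h n = int (((k-n)*q + s - 1) choose s)" for n
  have finU: "finite U" unfolding U_def by (rule finite_multisets_of_size) simp
  have M: "{X\<in>U. \<forall>r<k. \<exists>t\<in>#X. t mod k = r} = U - \<Union>(Z ` {..<k})"
    by (auto simp: Z_def)
  have sub: "\<Union>(Z ` {..<k}) \<subseteq> U" by (auto simp: Z_def)
  have cardM: "card {X\<in>U. \<forall>r<k. \<exists>t\<in>#X. t mod k = r} = card U - card (\<Union>(Z ` {..<k}))"
    unfolding M using sub finU by (simp add: card_Diff_subset finite_subset)
  have le: "card (\<Union>(Z ` {..<k})) \<le> card U" using sub finU by (simp add: card_mono)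
  have IE: "int (card (\<Union>(Z ` {..<k}) \<inter> U)) = (\<Sum>B | B \<subseteq> {..<k} \<and> B \<noteq> {}. (-1)^(card B+1) * int (card (\<Inter>(Z ` B) \<inter> U)))"
  proof (rule Incl_Excl_UN[of "\<lambda>S. int (card (S \<inter> U))"])
    fix S T :: "nat multiset set" assume "disjnt S T"
    then show "int (card ((S \<union> T) \<inter> U)) = int (card (S \<inter> U)) + int (card (T \<inter> U))"
      using finU by (simp add: Int_Un_distrib2 card_Un_disjoint disjnt_def) (subst card_Un_disjoint; auto)
  qed simp
  have cardI: "int (card (\<Inter>(Z ` B) \<inter> U)) = h (card B)" if B: "B \<subseteq> {..<k}" for B
  proof -
    have "\<Inter>(Z ` B) \<inter> U = multisets_of_size {t. t < k*q \<and> t mod k \<in> {..<k} - B} s"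
      using kpos by (auto simp: U_def Z_def multisets_of_size_def)
    moreover have "card {t. t < k*q \<and> t mod k \<in> {..<k} - B} = (k - card B) * q"
      using card_class[OF kpos, of "{..<k} - B" q] B by (simp add: card_Diff_subset finite_subset)
    ultimately show ?thesis
      by (simp add: h_def card_multisets_of_size)
  qed
  have finP: "finite {B. B \<subseteq> {..<k::nat}}" by simp
  have "(\<Sum>B | B \<subseteq> {..<k}. (-1)^(card B) * h (card B)) = h 0 + (\<Sum>B | B \<subseteq> {..<k} \<and> B \<noteq> {}. (-1)^(card B) * h (card B))"
  proof -
    have "{B. B \<subseteq> {..<k}} - {{}} = {B. B \<subseteq> {..<k} \<and> B \<noteq> {}}" by auto
    then show ?thesis using sum.remove[OF finP, of "{}" "\<lambda>B. (-1)^(card B) * h (card B)"] by simp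
  qed
  also have "(\<Sum>B | B \<subseteq> {..<k} \<and> B \<noteq> {}. (-1)^(card B) * h (card B))
     = - (\<Sum>B | B \<subseteq> {..<k} \<and> B \<noteq> {}. (-1)^(card B+1) * int (card (\<Inter>(Z ` B) \<inter> U)))"
    by (auto simp add: sum_negf[symmetric] cardI intro!: sum.cong)
  also have "\<dots> = - int (card (\<Union>(Z ` {..<k})))"
    using IE sub by (simp add: Int_absorb2)
  finally have A: "(\<Sum>B | B \<subseteq> {..<k}. (-1)^(card B) * h (card B)) = h 0 - int (card (\<Union>(Z ` {..<k})))" by simp
  have "card U = (k*q + s - 1) choose s" unfolding U_def by (simp add: card_multisets_of_size)
  then have hU: "h 0 = int (card U)" by (simp add: h_def)
  have "(\<Sum>B | B \<subseteq> {..<k}. (-1)^(card B) * h (card B)) = (\<Sum>n=0..k. int (k choose n) * ((-1)^n * h n))"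
    using sum_by_card[of "{..<k}" "\<lambda>n. (-1)^n * h n"] by simp
  then show ?thesis
    using A hU cardM le unfolding U_def h_def
    by (simp add: of_nat_diff algebra_simps)
qed



locale rot =
  fixes d q p k :: nat
  assumes d2: "d \<ge> 2" and q2: "q \<ge> 2" and p1: "1 \<le> p" and pq: "p < q"
    and cop: "coprime p q" and k1: "1 \<le> k"
begin

definition "N = k*q"
definition "P = k*p"
definition "D = d^q - 1"

lemma N_pos: "N > 0" using k1 q2 by (simp add: N_def)
lemma P_pos: "P > 0" using k1 p1 by (simp add: P_def)
lemma P_lt: "P < N" using k1 pq by (simp add: P_def N_def)
lemma qP: "q * P = p * N" by (simp add: P_def N_def)
lemma N_ge2: "N \<ge> 2" using k1 q2 unfolding N_def by (metis le_trans mult_1 mult_le_mono1)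

lemma dq_ge: "d^q \<ge> 2"
proof -
  have "d^q \<ge> d^1" using d2 q2 by (intro power_increasing) auto
  then show ?thesis using d2 by simp
qed

lemma D_real: "real D = real d ^ q - 1"
proof -
  have "real (d^q - 1) = real (d^q) - real 1" by (rule of_nat_diff) (use dq_ge in simp)
  then show ?thesis by (simp add: D_def)
qed
lemma D_pos: "real D > 0"
proof -
  have "real d ^ q \<ge> 2" using dq_ge by (metis of_nat_le_iff of_nat_numeral of_nat_power)
  then show ?thesis by (simp add: D_real)
qed

lemma geom: "(\<Sum>r<q. real d ^ (q - Suc r)) * (real d - 1) = real D"
proof -
  have "(\<Sum>r<q. real d ^ (q - Suc r)) = (\<Sum>r<q. real d ^ r)"
    by (rule sum.nat_diff_reindex)
  then show ?thesis using power_diff_1_eq[of "real d" q] by (simp add: D_real mult.commute)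
qed

definition nn :: "nat multiset \<Rightarrow> nat \<Rightarrow> nat \<Rightarrow> int" where
  "nn X c j = int c + (\<Sum>t<j. int (count X (t mod N)))"

definition Phi :: "nat multiset \<Rightarrow> nat \<Rightarrow> nat \<Rightarrow> real" where
  "Phi X c j = (real p + (\<Sum>r<q. real d ^ (q - Suc r) * of_int (nn X c (j + r*P)))) / real D"

definition good :: "nat multiset \<Rightarrow> bool" where
  "good X \<longleftrightarrow> set_mset X \<subseteq> {..<N} \<and> size X = d - 1"

lemma nn_Suc: "nn X c (Suc j) = nn X c j + int (count X (j mod N))"
  by (simp add: nn_def)

lemma nn_0: "nn X c 0 = int c" by (simp add: nn_def)

lemma size_sum: assumes "good X" shows "(\<Sum>t<N. count X t) = d - 1"
proof -
  have "size X = (\<Sum>t\<in>set_mset X. count X t)" by (rule size_multiset_overloaded_eq)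
  also have "\<dots> = (\<Sum>t<N. count X t)"
    using assms by (intro sum.mono_neutral_left) (auto simp: good_def count_eq_zero_iff)
  finally show ?thesis using assms by (simp add: good_def)
qed

lemma nn_N: assumes "good X" shows "nn X c (j + N) = nn X c j + int (d - 1)"
proof (induction j)
  case 0
  have "(\<Sum>t<N. int (count X (t mod N))) = (\<Sum>t<N. int (count X t))" by simp
  also have "\<dots> = int (d - 1)" using size_sum[OF assms] by (simp flip: of_nat_sum)
  finally show ?case by (simp add: nn_def)
next
  case (Suc j)
  have "nn X c (Suc j + N) = nn X c (Suc (j + N))" by simp
  also have "\<dots> = nn X c (j+N) + int (count X ((j+N) mod N))" by (rule nn_Suc)
  also have "\<dots> = nn X c (Suc j) + int (d - 1)" using Suc by (simp add: nn_Suc)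
  finally show ?case .
qed

lemma nn_mult: assumes "good X" shows "nn X c (j + m*N) = nn X c j + int m * int (d - 1)"
proof (induction m)
  case 0 then show ?case by simp
next
  case (Suc m)
  have "j + Suc m * N = (j + m*N) + N" by simp
  then show ?case using Suc nn_N[OF assms, of c "j + m*N"] by (simp add: algebra_simps)
qed

lemma Phi_rel: assumes "good X" shows "real d * Phi X c j - Phi X c (j+P) = of_int (nn X c j)"
proof -
  define a where "a r = (of_int (nn X c (j + r*P)) :: real)" for r
  define S1 where "S1 = (\<Sum>r<q. real d ^ (q - Suc r) * a r)"
  define S2 where "S2 = (\<Sum>r<q. real d ^ (q - Suc r) * a (Suc r))"
  have e1: "Phi X c j = (real p + S1) / real D" by (simp add: Phi_def S1_def a_def)
  have e2: "Phi X c (j+P) = (real p + S2) / real D"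
    by (simp add: Phi_def S2_def a_def add.assoc)
  have dS1: "real d * S1 = (\<Sum>r<q. real d ^ (q - r) * a r)"
    unfolding S1_def sum_distrib_left
  proof (rule sum.cong[OF refl])
    fix r assume "r \<in> {..<q}"
    then have "q - r = Suc (q - Suc r)" by simp
    then show "real d * (real d ^ (q - Suc r) * a r) = real d ^ (q - r) * a r" by simp
  qed
  have T: "(\<Sum>r<q. real d ^ (q - r) * a r) - S2 = real d ^ q * a 0 - a q"
    using sum_lessThan_telescope'[of "\<lambda>r. real d ^ (q - r) * a r" q]
    by (simp add: S2_def sum_subtractf)
  have aq: "a q = a 0 + real p * (real d - 1)"
  proof -
    have "nn X c (j + q*P) = nn X c (j + p*N)" using qP by (simp add: mult.commute)
    also have "\<dots> = nn X c j + int p * int (d - 1)" by (rule nn_mult[OF assms])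
    finally show ?thesis using d2 by (simp add: a_def of_nat_diff)
  qed
  have "real d * Phi X c j - Phi X c (j+P) = (real d * (real p + S1) - (real p + S2)) / real D"
    unfolding e1 e2 by (simp add: diff_divide_distrib)
  also have "real d * (real p + S1) - (real p + S2) = real D * a 0"
    using T aq dS1 by (simp add: D_real algebra_simps)
  finally show ?thesis using D_pos by (simp add: a_def)
qed

lemma Phi_N: assumes "good X" shows "Phi X c (j+N) = Phi X c j + 1"
proof -
  have "(\<Sum>r<q. real d ^ (q - Suc r) * of_int (nn X c (j + N + r*P)))
      = (\<Sum>r<q. real d ^ (q - Suc r) * of_int (nn X c (j + r*P))) + (\<Sum>r<q. real d ^ (q - Suc r)) * (real d - 1)"
  proof -
    have e: "real_of_int (nn X c (j + N + r*P)) = real_of_int (nn X c (j + r*P)) + (real d - 1)" for r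
      using nn_N[OF assms, of c "j + r*P"] d2 by (simp add: ac_simps of_nat_diff)
    then have "(\<Sum>r<q. real d ^ (q - Suc r) * of_int (nn X c (j + N + r*P)))
      = (\<Sum>r<q. real d ^ (q - Suc r) * of_int (nn X c (j + r*P)) + real d ^ (q - Suc r) * (real d - 1))"
      by (intro sum.cong refl) (simp only: e, simp add: algebra_simps)
    then show ?thesis by (simp add: sum.distrib sum_distrib_right)
  qed
  then show ?thesis using D_pos by (simp add: Phi_def geom add_divide_distrib)
qed

lemma Phi_Suc: "Phi X c (Suc j) - Phi X c j
   = (\<Sum>r<q. real d ^ (q - Suc r) * real (count X ((j + r*P) mod N))) / real D"
proof -
  have "nn X c (Suc j + r*P) = nn X c (j + r*P) + int (count X ((j + r*P) mod N))" for r
    using nn_Suc[of X c "j + r*P"] by simp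
  then show ?thesis
    by (simp add: Phi_def diff_divide_distrib[symmetric] sum_subtractf[symmetric] algebra_simps)
qed

definition "MM = {X \<in> multisets_of_size {..<N} (d-1). \<forall>r<k. \<exists>t\<in>#X. t mod k = r}"
definition "FF = {F :: nat \<Rightarrow> real. strict_mono F \<and> (\<forall>j. F (j+N) = F j + 1) \<and> 0 \<le> F 0 \<and> F 0 < 1
                 \<and> (\<forall>j. real d * F j - F (j+P) \<in> \<int>)}"

lemma MM_good: "X \<in> MM \<Longrightarrow> good X"
  by (auto simp: MM_def good_def multisets_of_size_def)

lemma surj_mod_q: assumes "b < q" shows "\<exists>r<q. (a + r*p) mod q = b"
proof -
  define f where "f r = (a + r*p) mod q" for r
  have "inj_on f {..<q}"
  proof (rule inj_onI)
    fix r r' assume r: "r \<in> {..<q}" "r' \<in> {..<q}" and "f r = f r'"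
    then have "[a + r*p = a + r'*p] (mod q)" by (simp add: f_def cong_def)
    then have "[r*p = r'*p] (mod q)" by (simp add: cong_add_lcancel_nat)
    then have "[r = r'] (mod q)" using cong_mult_rcancel_nat[OF cop] by simp
    then show "r = r'" using r by (simp add: cong_def)
  qed
  moreover have "f ` {..<q} \<subseteq> {..<q}" using q2 by (auto simp: f_def)
  ultimately have "f ` {..<q} = {..<q}" by (intro endo_inj_surj) auto
  then have "b \<in> f ` {..<q}" using assms by simp
  then show ?thesis by (auto simp: f_def)
qed

lemma mod_decomp: "x mod N = k * (x div k mod q) + x mod k"
  by (simp add: N_def mod_mult2_eq)

lemma class_hit:
  assumes "X \<in> MM" shows "\<exists>r<q. count X ((j + r*P) mod N) > 0"
proof -
  have "j mod k < k" using k1 by simp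
  then obtain t where t: "t \<in># X" "t mod k = j mod k"
    using assms unfolding MM_def by blast
  have tN: "t < N" using t assms by (auto simp: MM_def multisets_of_size_def)
  have "t div k < q" using tN by (simp add: N_def less_mult_imp_div_less mult.commute)
  then obtain r where r: "r < q" "(j div k + r*p) mod q = t div k" using surj_mod_q by blast
  have e1: "(j + r*P) div k = j div k + r*p"
  proof -
    have a: "j + r*P = j + k * (r*p)" by (simp add: P_def)
    have "(j + k * (r*p)) div k = j div k + r*p" using k1 by simp
    then show ?thesis by (simp only: a)
  qed
  have e2: "(j + r*P) mod k = j mod k"
  proof -
    have a: "j + r*P = j + k * (r*p)" by (simp add: P_def)
    show ?thesis by (simp only: a) simp
  qed
  have "(j + r*P) mod N = k * (t div k) + t mod k"
    using mod_decomp[of "j + r*P"] e1 e2 r t by simp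
  also have "\<dots> = t" by simp
  finally show ?thesis using r t by auto
qed

lemma Phi_strict: assumes "X \<in> MM" shows "strict_mono (Phi X c)"
  unfolding strict_mono_Suc_iff
proof
  fix j
  obtain r where r: "r < q" "count X ((j + r*P) mod N) > 0" using class_hit[OF assms] by blast
  have "0 < (\<Sum>r<q. real d ^ (q - Suc r) * real (count X ((j + r*P) mod N)))"
    by (rule sum_pos2[of _ r]) (use r d2 in auto)
  then have "Phi X c (Suc j) - Phi X c j > 0" using D_pos by (simp add: Phi_Suc)
  then show "Phi X c j < Phi X c (Suc j)" by simp
qed

lemma Phi_in_FF: assumes "X \<in> MM" "c < d - 1" shows "Phi X c \<in> FF"
proof -
  have g: "good X" using MM_good[OF assms(1)] .
  have sm: "strict_mono (Phi X c)" using Phi_strict[OF assms(1)] .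
  have per: "\<forall>j. Phi X c (j+N) = Phi X c j + 1" using Phi_N[OF g] by simp
  have rel0: "real d * Phi X c 0 - Phi X c P = real c" using Phi_rel[OF g, of c 0] by (simp add: nn_0)
  have a: "Phi X c 0 < Phi X c P" using sm P_pos by (simp add: strict_mono_less)
  have b: "Phi X c P < Phi X c N" using sm P_lt by (simp add: strict_mono_less)
  have b': "Phi X c N = Phi X c 0 + 1" using per[rule_format, of 0] by simp
  have cr: "real c + 1 \<le> real d - 1" using assms(2) by linarith
  have d1: "real d - 1 > 0" using d2 by simp
  have lo: "(real d - 1) * Phi X c 0 > 0" using rel0 a by (simp add: algebra_simps)
  have hi: "(real d - 1) * Phi X c 0 < real d - 1" using rel0 b b' cr by (simp add: algebra_simps)
  have "0 < Phi X c 0" using lo d1 by (simp add: zero_less_mult_iff)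
  moreover have "Phi X c 0 < 1" using hi d1 by (simp add: mult_less_cancel_left_pos[of _ _ 1, simplified])
  moreover have "\<forall>j. real d * Phi X c j - Phi X c (j+P) \<in> \<int>" using Phi_rel[OF g] by simp
  ultimately show ?thesis using sm per by (simp add: FF_def)
qed

lemma Phi_inj: "inj_on (\<lambda>(X,c). Phi X c) (MM \<times> {..<d-1})"
proof (rule inj_onI, clarsimp)
  fix X c X' c' assume X: "X \<in> MM" "X' \<in> MM" and eq: "Phi X c = Phi X' c'"
  have n: "nn X c j = nn X' c' j" for j
    using Phi_rel[OF MM_good[OF X(1)], of c j] Phi_rel[OF MM_good[OF X(2)], of c' j] eq by simp
  have "c = c'" using n[of 0] by (simp add: nn_0)
  moreover have "X = X'"
  proof (rule multiset_eqI)
    fix t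
    show "count X t = count X' t"
    proof (cases "t < N")
      case True
      then show ?thesis using n[of "Suc t"] n[of t] by (simp add: nn_Suc)
    next
      case False
      then have "t \<notin># X" "t \<notin># X'" using X by (auto simp: MM_def multisets_of_size_def)
      then show ?thesis by (simp add: not_in_iff)
    qed
  qed
  ultimately show "X = X' \<and> c = c'" by simp
qed

lemma FF_surj: assumes "F \<in> FF" shows "\<exists>X c. X \<in> MM \<and> c < d - 1 \<and> F = Phi X c"
proof -
  have sm: "strict_mono F" and per: "\<And>j. F (j+N) = F j + 1" and F0: "0 \<le> F 0" "F 0 < 1"
    and int: "\<And>j. real d * F j - F (j+P) \<in> \<int>"
    using assms by (auto simp: FF_def)
  have perm: "F (j + m*N) = F j + real m" for j m
  proof (induction m)
    case (Suc m)
    have "F (j + Suc m * N) = F ((j + m*N) + N)" by (simp add: algebra_simps)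
    also have "\<dots> = F (j + m*N) + 1" by (rule per)
    finally show ?case using Suc by simp
  qed simp
  have inc1: "F j < F (Suc j)" for j using sm by (simp add: strict_mono_less)
  have inc2: "F (Suc j) < F j + 1" for j
  proof -
    have "Suc j < j + N" using N_ge2 by simp
    then have "F (Suc j) < F (j + N)" using sm by (simp add: strict_mono_less)
    then show ?thesis using per[of j] by simp
  qed
  define ni where "ni j = \<lfloor>real d * F j - F (j+P)\<rfloor>" for j
  have ni: "of_int (ni j) = real d * F j - F (j+P)" for j
    using int[of j] unfolding ni_def by (metis Ints_cases floor_of_int)
  have ni_per: "ni (j + N) = ni j + int (d - 1)" for j
  proof -
    have "F (j + N + P) = F (j + P) + 1" using per[of "j+P"] by (simp add: ac_simps)
    then have "real_of_int (ni (j + N)) = real_of_int (ni j + int (d - 1))"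
      using ni[of "j+N"] ni[of j] per[of j] d2 by (simp add: algebra_simps of_nat_diff)
    then show ?thesis by (simp only: of_int_eq_iff)
  qed
  have ni_perm: "ni (j + m*N) = ni j + int m * int (d - 1)" for j m
  proof (induction m)
    case (Suc m)
    have "j + Suc m * N = (j + m*N) + N" by simp
    then show ?case using Suc ni_per[of "j + m*N"] by (simp add: algebra_simps)
  qed simp
  have ni_mono: "ni j \<le> ni (Suc j)" for j
  proof -
    have "real_of_int (ni (Suc j) - ni j) = real d * (F (Suc j) - F j) - (F (Suc (j+P)) - F (j+P))"
      using ni[of "Suc j"] ni[of j] by (simp add: algebra_simps)
    also have "\<dots> > -1"
    proof -
      have "real d * (F (Suc j) - F j) > 0" using inc1[of j] d2 by simp
      moreover have "F (Suc (j+P)) - F (j+P) < 1" using inc2[of "j+P"] by simp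
      ultimately show ?thesis by linarith
    qed
    finally have "ni (Suc j) - ni j > -1" by linarith
    then show ?thesis by simp
  qed
  define m where "m t = nat (ni (Suc t) - ni t)" for t
  have m: "int (m t) = ni (Suc t) - ni t" for t using ni_mono[of t] by (simp add: m_def)
  define X where "X = (\<Sum>t<N. replicate_mset (m t) t)"
  have cX: "count X x = (if x < N then m x else 0)" for x
    by (simp add: X_def count_sum)
  have n0: "0 \<le> ni 0 \<and> ni 0 < int (d - 1)"
  proof -
    have a: "F 0 < F P" using sm P_pos by (simp add: strict_mono_less)
    have b: "F P < F N" using sm P_lt by (simp add: strict_mono_less)
    have b': "F N = F 0 + 1" using per[of 0] by simp
    have "real_of_int (ni 0) = (real d - 1) * F 0 - (F P - F 0)" using ni[of 0] by (simp add: algebra_simps)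
    moreover have "(real d - 1) * F 0 \<ge> 0" using F0 d2 by simp
    moreover have "(real d - 1) * F 0 < real d - 1" using F0 d2 by simp
    ultimately have "real_of_int (ni 0) > -1" "real_of_int (ni 0) < real d - 1" using a b b' by linarith+
    then show ?thesis using d2 by (simp add: of_nat_diff)
  qed
  define c where "c = nat (ni 0)"
  have c: "c < d - 1" "int c = ni 0" using n0 by (auto simp: c_def)
  have nnX: "nn X c j = ni j" for j
  proof (induction j)
    case 0 then show ?case by (simp add: nn_0 c)
  next
    case (Suc j)
    have jd: "j = j mod N + (j div N) * N" by (simp add: mod_div_mult_eq)
    have "ni (Suc j) - ni j = ni (Suc (j mod N)) - ni (j mod N)"
    proof -
      have "ni (Suc j) = ni (Suc (j mod N) + (j div N) * N)"
        by (metis add_Suc jd)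
      also have "\<dots> = ni (Suc (j mod N)) + int (j div N) * int (d - 1)" by (rule ni_perm)
      finally have 1: "ni (Suc j) = ni (Suc (j mod N)) + int (j div N) * int (d - 1)" .
      have "ni j = ni (j mod N + (j div N) * N)" using jd by metis
      also have "\<dots> = ni (j mod N) + int (j div N) * int (d - 1)" by (rule ni_perm)
      finally show ?thesis using 1 by simp
    qed
    then show ?case using Suc N_pos by (simp add: nn_Suc cX m)
  qed
  have sizeX: "size X = d - 1"
  proof -
    have "int (size X) = (\<Sum>t<N. int (m t))" by (simp add: X_def)
    also have "\<dots> = ni N - ni 0" by (simp add: m sum_lessThan_telescope)
    also have "\<dots> = int (d - 1)" using ni_per[of 0] by simp
    finally show ?thesis by simp
  qed
  have setX: "set_mset X \<subseteq> {..<N}"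
  proof
    fix x assume "x \<in># X"
    then have "count X x \<noteq> 0" by simp
    then show "x \<in> {..<N}" using cX[of x] by (auto split: if_splits)
  qed
  have g: "good X" using sizeX setX by (simp add: good_def)
  have FPhi: "F = Phi X c"
  proof
    fix j
    define H where "H i = F i - Phi X c i" for i
    have H1: "H (i + P) = real d * H i" for i
      using Phi_rel[OF g, of c i] ni[of i] nnX[of i] by (simp add: H_def algebra_simps)
    have H2: "H (i + N) = H i" for i using Phi_N[OF g] per by (simp add: H_def)
    have H3: "H (i + r*P) = real d ^ r * H i" for i r
    proof (induction r)
      case (Suc r)
      have "H (i + Suc r * P) = H ((i + r*P) + P)" by (simp add: algebra_simps)
      also have "\<dots> = real d * H (i + r*P)" by (rule H1)
      finally show ?case using Suc by simp
    qed simp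
    have H4: "H (i + m*N) = H i" for i m
    proof (induction m)
      case (Suc m)
      have "H (i + Suc m * N) = H ((i + m*N) + N)" by (simp add: algebra_simps)
      also have "\<dots> = H (i + m*N)" by (rule H2)
      finally show ?case using Suc by simp
    qed simp
    have "real d ^ q * H j = H j" using H3[of j q] H4[of j p] qP by (simp add: mult.commute)
    moreover have "real d ^ q \<noteq> 1" using D_pos D_real by simp
    ultimately have "H j = 0" by (metis mult_cancel_right2)
    then show "F j = Phi X c j" by (simp add: H_def)
  qed
  have "X \<in> MM"
  proof -
    have "\<exists>t\<in>#X. t mod k = r" if r: "r < k" for r
    proof -
      have "0 < Phi X c (Suc r) - Phi X c r" using inc1[of r] FPhi by simp
      then have "0 < (\<Sum>r'<q. real d ^ (q - Suc r') * real (count X ((r + r'*P) mod N)))"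
        using D_pos by (simp add: Phi_Suc zero_less_divide_iff)
      then obtain r' where "r' < q" "count X ((r + r'*P) mod N) \<noteq> 0"
        by (metis (no_types, lifting) lessThan_iff mult_zero_right of_nat_0 sum.neutral less_irrefl)
      moreover have "(r + r'*P) mod N mod k = r"
      proof -
        have 1: "(r + r'*P) mod N mod k = (r + r'*P) mod k" by (simp add: N_def mod_mod_cancel)
        have 2: "r + r'*P = r + k*(r'*p)" by (simp add: P_def)
        have "(r + k*(r'*p)) mod k = r" using r by simp
        then have 3: "(r + r'*P) mod k = r" by (subst 2)
        show ?thesis using 1 3 by (rule trans)
      qed
      ultimately show ?thesis by (metis count_eq_zero_iff)
    qed
    then show ?thesis using sizeX setX by (simp add: MM_def multisets_of_size_def)
  qed
  then show ?thesis using c FPhi by blast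
qed

lemma card_FF: "card FF = card MM * (d - 1)"
proof -
  have "bij_betw (\<lambda>(X,c). Phi X c) (MM \<times> {..<d-1}) FF"
    unfolding bij_betw_def
  proof
    show "inj_on (\<lambda>(X, c). Phi X c) (MM \<times> {..<d - 1})" by (rule Phi_inj)
    show "(\<lambda>(X, c). Phi X c) ` (MM \<times> {..<d - 1}) = FF"
    proof
      show "(\<lambda>(X, c). Phi X c) ` (MM \<times> {..<d - 1}) \<subseteq> FF" using Phi_in_FF by auto
      show "FF \<subseteq> (\<lambda>(X, c). Phi X c) ` (MM \<times> {..<d - 1})"
        using FF_surj by fastforce
    qed
  qed
  then show ?thesis by (metis bij_betw_same_card card_cartesian_product card_lessThan)
qed

definition "SS = {A :: real set. card A = N \<and> rotational_with d A P}"

lemma SS_props: assumes "A \<in> SS" shows "finite A" "A \<subseteq> {0..<1}" "A \<noteq> {}" "card A = N"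
  using assms by (auto simp: SS_def rotational_with_def)

lemma Psi_in: assumes "A \<in> SS" "i < N" shows "(\<lambda>j. G A (i+j)) \<in> FF"
proof -
  note pr = SS_props[OF assms(1)]
  have sm: "strict_mono (\<lambda>j. G A (i+j))"
    using G_strict[OF pr(1-3)] by (simp add: strict_mono_def)
  have per: "\<forall>j. G A (i + (j+N)) = G A (i+j) + 1"
    using G_per[OF pr(1-3)] pr(4) by (simp add: add.assoc[symmetric])
  have b: "0 \<le> G A i \<and> G A i < 1"
    using G_small[OF pr(1-3)] xs_bounds[OF pr(1-3)] assms(2) pr(4) by simp
  have r: "\<forall>i'. real d * G A i' - G A (i'+P) \<in> \<int>"
    using ROT[OF pr(1-3)] assms(1) by (simp add: SS_def)
  have "\<forall>j. real d * G A (i+j) - G A (i+(j+P)) \<in> \<int>"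
    using r by (simp add: add.assoc[symmetric])
  then show ?thesis using sm per b by (simp add: FF_def)
qed

lemma A_range: assumes "A \<in> SS" "i < N" shows "A = frac ` range (\<lambda>j. G A (i+j))"
proof -
  note pr = SS_props[OF assms(1)]
  define xs where "xs = sorted_list_of_set A"
  have fr: "frac (G A m) = xs ! (m mod N)" for m using G_frac[OF pr(1-3)] pr(4) by (simp add: xs_def)
  show ?thesis
  proof
    show "frac ` range (\<lambda>j. G A (i + j)) \<subseteq> A"
      using fr xs_in[OF pr(1-3)] pr(4) N_pos by (auto simp: xs_def)
    show "A \<subseteq> frac ` range (\<lambda>j. G A (i + j))"
    proof
      fix x assume "x \<in> A"
      then have "x \<in> set xs" using pr(1) by (simp add: xs_def)
      then obtain t where t: "t < length xs" "x = xs ! t" by (metis in_set_conv_nth)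
      have tN: "t < N" using t len_xs[OF pr(1-3)] pr(4) by (simp add: xs_def)
      have "(i + (t + N - i)) mod N = t" using assms(2) tN by simp
      then have "frac (G A (i + (t + N - i))) = x" using fr t by simp
      then show "x \<in> frac ` range (\<lambda>j. G A (i + j))" by (metis rangeI image_eqI)
    qed
  qed
qed

lemma Psi_inj: "inj_on (\<lambda>(A,i). (\<lambda>j. G A (i+j))) (SS \<times> {..<N})"
proof (rule inj_onI, clarsimp)
  fix A i B i' assume A: "A \<in> SS" "i < N" and B: "B \<in> SS" "i' < N"
    and eq: "(\<lambda>j. G A (i+j)) = (\<lambda>j. G B (i'+j))"
  have AB: "A = B" using A_range[OF A] A_range[OF B] eq by metis
  have "G A i = G A i'" using fun_cong[OF eq, of 0] AB by simp
  then have "i = i'" using G_strict[OF SS_props(1-3)[OF A(1)]] by (simp add: strict_mono_eq)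
  then show "A = B \<and> i = i'" using AB by simp
qed

lemma Psi_surj: assumes "F \<in> FF" shows "\<exists>A\<in>SS. \<exists>i<N. F = (\<lambda>j. G A (i+j))"
proof -
  have sm: "strict_mono F" and per: "\<And>j. F (j+N) = F j + 1" and F0: "0 \<le> F 0" "F 0 < 1"
    and int: "\<And>j. real d * F j - F (j+P) \<in> \<int>"
    using assms by (auto simp: FF_def)
  have perm: "F (j + m*N) = F j + real m" for j m
  proof (induction m)
    case (Suc m)
    have "F (j + Suc m * N) = F ((j + m*N) + N)" by (simp add: algebra_simps)
    also have "\<dots> = F (j + m*N) + 1" by (rule per)
    finally show ?case using Suc by simp
  qed simp
  have le: "i \<le> j \<Longrightarrow> F i \<le> F j" for i j using sm by (simp add: strict_mono_less_eq)
  define a where "a = (LEAST j. 1 \<le> F j)"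
  have exN: "1 \<le> F N" using per[of 0] F0 by simp
  have a1: "1 \<le> F a" unfolding a_def using exN by (rule LeastI)
  have aN: "a \<le> N" unfolding a_def using exN by (rule Least_le)
  have a0: "a \<noteq> 0"
  proof
    assume "a = 0" with a1 F0 show False by simp
  qed
  have am1: "F (a - 1) < 1"
  proof -
    have "a - 1 < a" using a0 by simp
    then have "\<not> 1 \<le> F (a - 1)" unfolding a_def by (rule not_less_Least)
    then show ?thesis by simp
  qed
  define f where "f i = F (a + i) - 1" for i
  have fsm: "strict_mono f" using sm by (simp add: strict_mono_def f_def)
  define A where "A = f ` {..<N}"
  have finA: "finite A" by (simp add: A_def)
  have cardA: "card A = N" unfolding A_def
    using fsm by (simp add: card_image strict_mono_imp_inj_on)
  have neA: "A \<noteq> {}" using N_pos by (auto simp: A_def lessThan_empty_iff)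
  have fb: "0 \<le> f i \<and> f i < 1" if "i < N" for i
  proof -
    have "1 \<le> F (a + i)" using a1 le[of a "a+i"] by simp
    moreover have "F (a + i) \<le> F (a - 1 + N)" using that a0 by (intro le) simp
    moreover have "F (a - 1 + N) = F (a - 1) + 1" by (rule per)
    ultimately show ?thesis using am1 by (simp add: f_def)
  qed
  have subA: "A \<subseteq> {0..<1}" using fb by (auto simp: A_def)
  have sl: "sorted_list_of_set A = map f [0..<N]"
  proof (rule strict_sorted_equal)
    show "sorted_wrt (<) (map f [0..<N])"
      using fsm by (simp add: sorted_wrt_iff_nth_less strict_mono_def)
    show "sorted_wrt (<) (sorted_list_of_set A)" by (rule strict_sorted_list_of_set)
    show "set (sorted_list_of_set A) = set (map f [0..<N])"
      using finA by (simp add: A_def atLeast0LessThan)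
  qed
  have GA: "G A i = F (a + i) - 1" for i
  proof -
    have "G A i = f (i mod N) + real (i div N)"
      using N_pos by (simp add: G_def cardA sl)
    also have "\<dots> = F ((a + i mod N) + (i div N) * N) - 1" by (simp add: f_def perm)
    also have "(a + i mod N) + (i div N) * N = a + i" by (simp add: mod_div_mult_eq)
    finally show ?thesis .
  qed
  have rot: "rotational_with d A P"
  proof -
    have "P mod card A \<noteq> 0" using cardA P_pos P_lt by simp
    moreover have "real d * G A i - G A (i+P) \<in> \<int>" for i
    proof -
      have "real d * G A i - G A (i+P) = (real d * F (a+i) - F (a+i+P)) - (real d - 1)"
        by (simp add: GA algebra_simps)
      moreover have "real d - 1 \<in> \<int>" by simp
      ultimately show ?thesis using int[of "a+i"] by simp
    qed
    ultimately show ?thesis using ROT[OF finA subA neA] by simp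
  qed
  have "A \<in> SS" using cardA rot by (simp add: SS_def)
  moreover have "N - a < N" using a0 aN by simp
  moreover have "F = (\<lambda>j. G A ((N - a) + j))"
  proof
    fix j
    have "a + (N - a + j) = j + N" using aN by simp
    then show "F j = G A (N - a + j)" using per[of j] by (simp add: GA add.commute)
  qed
  ultimately show ?thesis by blast
qed

lemma card_SS: "card SS * N = card FF"
proof -
  have "bij_betw (\<lambda>(A,i). (\<lambda>j. G A (i+j))) (SS \<times> {..<N}) FF"
    unfolding bij_betw_def
  proof
    show "inj_on (\<lambda>(A,i). (\<lambda>j. G A (i+j))) (SS \<times> {..<N})" by (rule Psi_inj)
    show "(\<lambda>(A,i). (\<lambda>j. G A (i+j))) ` (SS \<times> {..<N}) = FF"
    proof
      show "(\<lambda>(A,i). (\<lambda>j. G A (i+j))) ` (SS \<times> {..<N}) \<subseteq> FF" using Psi_in by auto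
      show "FF \<subseteq> (\<lambda>(A,i). (\<lambda>j. G A (i+j))) ` (SS \<times> {..<N})"
        using Psi_surj by fastforce
    qed
  qed
  then show ?thesis by (metis bij_betw_same_card card_cartesian_product card_lessThan)
qed

lemma card_SS_MM: "card SS * N = card MM * (d - 1)"
  using card_SS card_FF by simp

end


lemma term_eq:
  fixes d q k j :: nat
  assumes "d \<ge> 2" "1 \<le> j" "j \<le> k"
  shows "int (k*q) * ((-1)^(k+j) * int ((k-1) choose (j-1)) * int ((d-2+j*q) choose (d-2)))
       = int (d-1) * ((-1)^(k-j) * int (k choose j) * int ((j*q + d - 2) choose (d-1)))"
proof -
  have s: "(-1::int)^(k+j) = (-1)^(k-j)"
  proof -
    have eq: "k + j = (k - j) + 2*j" using assms by simp
    have "(-1::int)^(k+j) = (-1)^((k - j) + 2*j)" by (subst eq) (rule refl)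
    also have "\<dots> = (-1)^(k-j)" by (simp add: power_add power_mult)
    finally show ?thesis .
  qed
  have b1: "k * ((k-1) choose (j-1)) = j * (k choose j)"
    using times_binomial_minus1_eq[of j k] assms by simp
  have b2: "(j*q) * ((d-2+j*q) choose (d-2)) = (d-1) * ((j*q + d - 2) choose (d-1))"
  proof (cases "j*q")
    case 0
    then show ?thesis using assms by simp
  next
    case (Suc b)
    obtain e where de: "d = e + 2" using assms by (metis add.commute le_Suc_ex)
    have L: "Suc e * (Suc (e + b) choose Suc e) = Suc b * (Suc (e + b) choose e)"
      by (rule Suc_times_binomial_add)
    have x1: "d-2+j*q = Suc (e + b)" "j*q + d - 2 = Suc (e + b)" "d - 2 = e" "d - 1 = Suc e"
      using Suc de by auto
    have l: "(j*q) * ((d-2+j*q) choose (d-2)) = Suc b * (Suc (e + b) choose e)"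
      by (simp only: x1(1), simp only: x1(3), simp only: Suc)
    have r: "(d-1) * ((j*q + d - 2) choose (d-1)) = Suc e * (Suc (e + b) choose Suc e)"
      by (simp only: x1(2) x1(4))
    show ?thesis unfolding l r using L by simp
  qed
  have "(k*q) * (((k-1) choose (j-1)) * ((d-2+j*q) choose (d-2)))
      = q * (k * ((k-1) choose (j-1))) * ((d-2+j*q) choose (d-2))" by (simp add: algebra_simps)
  also have "\<dots> = (k choose j) * ((j*q) * ((d-2+j*q) choose (d-2)))" unfolding b1 by (simp add: algebra_simps)
  also have "\<dots> = (d-1) * ((k choose j) * ((j*q + d - 2) choose (d-1)))" unfolding b2 by (simp add: algebra_simps)
  finally have N1: "(k*q) * (((k-1) choose (j-1)) * ((d-2+j*q) choose (d-2)))
      = (d-1) * ((k choose j) * ((j*q + d - 2) choose (d-1)))" .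
  have I: "int (k*q) * (int ((k-1) choose (j-1)) * int ((d-2+j*q) choose (d-2)))
      = int (d-1) * (int (k choose j) * int ((j*q + d - 2) choose (d-1)))"
    using arg_cong[OF N1, of int] by (simp only: of_nat_mult)
  define sg where "sg = (-1::int)^(k-j)"
  have "int (k*q) * ((-1)^(k+j) * int ((k-1) choose (j-1)) * int ((d-2+j*q) choose (d-2)))
      = sg * (int (k*q) * (int ((k-1) choose (j-1)) * int ((d-2+j*q) choose (d-2))))"
    unfolding s sg_def by (simp only: ac_simps)
  also have "\<dots> = sg * (int (d-1) * (int (k choose j) * int ((j*q + d - 2) choose (d-1))))"
    by (simp only: I)
  also have "\<dots> = int (d-1) * ((-1)^(k-j) * int (k choose j) * int ((j*q + d - 2) choose (d-1)))"
    unfolding sg_def by (simp only: ac_simps)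
  finally show ?thesis .
qed

lemma final_arith:
  fixes d q k S M :: nat
  assumes d2: "d \<ge> 2" and q1: "q \<ge> 1" and k1: "k \<ge> 1"
    and h1: "S * (k*q) = M * (d-1)"
    and h2: "int M = (\<Sum>n=0..k. (-1)^n * int (k choose n) * int (((k-n)*q + (d-1) - 1) choose (d-1)))"
  shows "int S = (\<Sum>j=1..k. (-1)^(k+j) * int ((k-1) choose (j-1)) * int ((d-2+j*q) choose (d-2)))"
proof -
  define g where "g n = (-1::int)^n * int (k choose n) * int (((k-n)*q + (d-1) - 1) choose (d-1))" for n
  define h where "h j = (-1::int)^(k-j) * int (k choose j) * int ((j*q + d - 2) choose (d-1))" for j
  have "(\<Sum>n=0..k. g n) = (\<Sum>j=0..k. g (k - j))"
    by (intro sum.reindex_bij_witness[of _ "\<lambda>j. k - j" "\<lambda>j. k - j"]) auto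
  also have "\<dots> = (\<Sum>j=0..k. h j)"
  proof (rule sum.cong[OF refl])
    fix j assume "j \<in> {0..k}"
    then have j: "j \<le> k" by simp
    then have "k - (k - j) = j" "(j*q + (d-1) - 1) = j*q + d - 2" using d2 by auto
    then show "g (k - j) = h j" using j by (simp add: g_def h_def binomial_symmetric[OF j, symmetric])
  qed
  also have "\<dots> = h 0 + (\<Sum>j=1..k. h j)"
    by (simp add: sum.atLeast_Suc_atMost)
  also have "h 0 = 0" using d2 by (simp add: h_def)
  finally have R: "int M = (\<Sum>j=1..k. h j)" using h2 by (simp add: g_def)
  have "int (k*q) * (\<Sum>j=1..k. (-1)^(k+j) * int ((k-1) choose (j-1)) * int ((d-2+j*q) choose (d-2)))
      = (\<Sum>j=1..k. int (d-1) * h j)"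
    unfolding sum_distrib_left h_def using d2 by (intro sum.cong refl term_eq) auto
  also have "\<dots> = int (d-1) * int M" by (simp add: R sum_distrib_left)
  also have "\<dots> = int (k*q) * int S" using h1 by (metis mult.commute of_nat_mult)
  finally show ?thesis using k1 q1 by simp
qed

theorem mainTheorem11:
  fixes d q p k :: nat
  assumes "d \<ge> 2" and "q \<ge> 2" and "1 \<le> p" and "p \<le> q - 1" and "coprime p q"
    and "1 \<le> k" and "k \<le> d - 1"
  shows "int (card {A :: real set. card A = k * q \<and> rotational_with d A (k * p)})
         = (\<Sum>j = 1..k. (-1) ^ (k + j) * int ((k - 1) choose (j - 1))
                          * int ((d - 2 + j * q) choose (d - 2)))"
proof -
  interpret rot d q p k using assms by unfold_locales auto
  have e: "{A :: real set. card A = k * q \<and> rotational_with d A (k * p)} = SS"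
    by (simp add: SS_def N_def P_def)
  have h1: "card SS * (k*q) = card MM * (d-1)" using card_SS_MM by (simp add: N_def)
  have h2: "int (card MM) = (\<Sum>n=0..k. (-1)^n * int (k choose n) * int (((k-n)*q + (d-1) - 1) choose (d-1)))"
    using card_M[of k q "d-1"] assms by (simp add: MM_def N_def)
  show ?thesis unfolding e using final_arith[OF _ _ _ h1 h2] assms by simp
qed


end
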